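(* Let $(X,\phi)$ be a flow on a compact metric space $(X,d)$. Then for every $\tau>0$, $$\frac1\tau\overline{\mathrm{mdim}}_M(\phi_\tau,X,d)\le\overline{\mathrm{mdim}}_M(\phi,X,d),\qquad \frac1\tau\underline{\mathrm{mdim}}_M(\phi_\tau,X,d)\le\underline{\mathrm{mdim}}_M(\phi,X,d).$$ If moreover $(X,\phi)$ is a uniformly Lipschitz flow, then both inequalities are equalities.
   Context: A flow: $\phi:X\times\mathbb{R}\to X$ continuous, $\phi_t(x)=\phi(x,t)$, $\phi_0=\mathrm{id}$, $\phi_{t+s}=\phi_t\circ\phi_s$. Uniformly Lipschitz: for every $t_0>0$ there is $L(t_0)>0$ such that for all $\epsilon>0$ and $x,y\in X$, $d(x,y)\le\epsilon/L(t_0)$ implies $d(\phi_sx,\phi_sy)<\epsilon$ for all $s\in[0,t_0]$. Flow metric mean dimension: $d_t(x,y)=\max_{s\in[0,t]}d(\phi_sx,\phi_sy)$; $r_t(\phi,X,d,\epsilon)$ is the minimal cardinality of $E\subset X$ with every $x\in X$ $d_t$-within $\epsilon$ (strictly) of $E$; $r(\phi,X,d,\epsilon)=\limsup_{t\to\infty}\frac1t\log r_t(\phi,X,d,\epsilon)$; $\overline{\mathrm{mdim}}_M(\phi,X,d)=\limsup_{\epsilon\to0}\frac{r(\phi,X,d,\epsilon)}{\log(1/\epsilon)}$, $\underline{\mathrm{mdim}}_M$ with $\liminf$. For the homeomorphism $\phi_\tau$: $d_{n,\phi_\tau}(x,y)=\max_{0\le j\le n-1}d(\phi_{\tau j}x,\phi_{\tau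 j}y)$; $r_n(\phi_\tau,X,d,\epsilon)$ is the minimal cardinality of $E\subset X$ with every $x\in X$ satisfying $d_{n,\phi_\tau}(x,y)<\epsilon$ for some $y\in E$; $r(\phi_\tau,X,d,\epsilon)=\limsup_{n\to\infty}\frac1n\log r_n(\phi_\tau,X,d,\epsilon)$; $\overline{\mathrm{mdim}}_M(\phi_\tau,X,d)=\limsup_{\epsilon\to0}\frac{r(\phi_\tau,X,d,\epsilon)}{\log(1/\epsilon)}$, $\underline{\mathrm{mdim}}_M(\phi_\tau,X,d)$ with $\liminf$. *)

theory Defs
  imports "HOL-Analysis.Analysis"
begin

text \<open>A (continuous) flow on X: phi x t = \<phi>_t(x).\<close>
definition is_flow :: "'a::metric_space set \<Rightarrow> ('a \<Rightarrow> real \<Rightarrow> 'a) \<Rightarrow> bool" where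
  "is_flow X phi \<longleftrightarrow>
     continuous_on (X \<times> UNIV) (\<lambda>(x, t). phi x t) \<and>
     (\<forall>x\<in>X. \<forall>t. phi x t \<in> X) \<and>
     (\<forall>x\<in>X. phi x 0 = x) \<and>
     (\<forall>x\<in>X. \<forall>t s. phi x (t + s) = phi (phi x s) t)"

definition uniformly_lipschitz_flow :: "'a::metric_space set \<Rightarrow> ('a \<Rightarrow> real \<Rightarrow> 'a) \<Rightarrow> bool" where
  "uniformly_lipschitz_flow X phi \<longleftrightarrow>
     (\<forall>t0>0. \<exists>L>0. \<forall>\<epsilon>>0. \<forall>x\<in>X. \<forall>y\<in>X.
        dist x y \<le> \<epsilon> / L \<longrightarrow> (\<forall>s\<in>{0..t0}. dist (phi x s) (phi y s) < \<epsilon>))"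

definition flow_dist :: "('a::metric_space \<Rightarrow> real \<Rightarrow> 'a) \<Rightarrow> real \<Rightarrow> 'a \<Rightarrow> 'a \<Rightarrow> real" where
  "flow_dist phi t x y = (SUP s\<in>{0..t}. dist (phi x s) (phi y s))"

definition flow_span :: "'a::metric_space set \<Rightarrow> ('a \<Rightarrow> real \<Rightarrow> 'a) \<Rightarrow> real \<Rightarrow> real \<Rightarrow> nat" where
  "flow_span X phi t \<epsilon> = Inf {card E | E. finite E \<and> E \<subseteq> X \<and>
       (\<forall>x\<in>X. \<exists>y\<in>E. flow_dist phi t x y < \<epsilon>)}"

definition flow_span_rate :: "'a::metric_space set \<Rightarrow> ('a \<Rightarrow> real \<Rightarrow> 'a) \<Rightarrow> real \<Rightarrow> ereal" where
  "flow_span_rate X phi \<epsilon> = Limsup at_top (\<lambda>t. ereal (ln (real (flow_span X phi t \<epsilon>)) / t))"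

definition flow_upper_mdim :: "'a::metric_space set \<Rightarrow> ('a \<Rightarrow> real \<Rightarrow> 'a) \<Rightarrow> ereal" where
  "flow_upper_mdim X phi = Limsup (at_right 0) (\<lambda>\<epsilon>. flow_span_rate X phi \<epsilon> / ereal (ln (1 / \<epsilon>)))"

definition flow_lower_mdim :: "'a::metric_space set \<Rightarrow> ('a \<Rightarrow> real \<Rightarrow> 'a) \<Rightarrow> ereal" where
  "flow_lower_mdim X phi = Liminf (at_right 0) (\<lambda>\<epsilon>. flow_span_rate X phi \<epsilon> / ereal (ln (1 / \<epsilon>)))"

text \<open>Time-tau map \<phi>_tau: d_{n,\<phi>_tau}(x,y) = max_{0 \<le> j \<le> n-1} d(\<phi>_{tau j} x, \<phi>_{tau j} y).\<close>
definition time_dist :: "('a::metric_space \<Rightarrow> real \<Rightarrow> 'a) \<Rightarrow> real \<Rightarrow> nat \<Rightarrow> 'a \<Rightarrow> 'a \<Rightarrow> real" where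
  "time_dist phi \<tau> n x y = (SUP j\<in>{..<n}. dist (phi x (\<tau> * real j)) (phi y (\<tau> * real j)))"

definition time_span :: "'a::metric_space set \<Rightarrow> ('a \<Rightarrow> real \<Rightarrow> 'a) \<Rightarrow> real \<Rightarrow> nat \<Rightarrow> real \<Rightarrow> nat" where
  "time_span X phi \<tau> n \<epsilon> = Inf {card E | E. finite E \<and> E \<subseteq> X \<and>
       (\<forall>x\<in>X. \<exists>y\<in>E. time_dist phi \<tau> n x y < \<epsilon>)}"

definition time_span_rate :: "'a::metric_space set \<Rightarrow> ('a \<Rightarrow> real \<Rightarrow> 'a) \<Rightarrow> real \<Rightarrow> real \<Rightarrow> ereal" where
  "time_span_rate X phi \<tau> \<epsilon> = Limsup sequentially (\<lambda>n. ereal (ln (real (time_span X phi \<tau> n \<epsilon>)) / real n))"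

definition time_upper_mdim :: "'a::metric_space set \<Rightarrow> ('a \<Rightarrow> real \<Rightarrow> 'a) \<Rightarrow> real \<Rightarrow> ereal" where
  "time_upper_mdim X phi \<tau> = Limsup (at_right 0) (\<lambda>\<epsilon>. time_span_rate X phi \<tau> \<epsilon> / ereal (ln (1 / \<epsilon>)))"

definition time_lower_mdim :: "'a::metric_space set \<Rightarrow> ('a \<Rightarrow> real \<Rightarrow> 'a) \<Rightarrow> real \<Rightarrow> ereal" where
  "time_lower_mdim X phi \<tau> = Liminf (at_right 0) (\<lambda>\<epsilon>. time_span_rate X phi \<tau> \<epsilon> / ereal (ln (1 / \<epsilon>)))"

end

theory Submission
  imports Defs
begin


locale cflow =
  fixes X :: "'a::metric_space set" and phi :: "'a \<Rightarrow> real \<Rightarrow> 'a"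
  assumes cpt: "compact X" and ne: "X \<noteq> {}" and fl: "is_flow X phi"
begin

lemma cont: "continuous_on (X \<times> UNIV) (\<lambda>(x, t). phi x t)"
  and inX: "x \<in> X \<Longrightarrow> phi x t \<in> X"
  and grp: "x \<in> X \<Longrightarrow> phi x (t + s) = phi (phi x s) t"
  using fl unfolding is_flow_def by auto

lemma cont_s: assumes "x \<in> X" shows "continuous_on S (\<lambda>s. phi x s)"
proof -
  have "continuous_on S (\<lambda>s. (\<lambda>(x, t). phi x t) (x, s))"
    by (rule continuous_on_compose2[OF cont]) (auto intro!: continuous_intros simp: assms)
  then show ?thesis by simp
qed

lemma cont_d: assumes "x \<in> X" "y \<in> X" shows "continuous_on S (\<lambda>s. dist (phi x s) (phi y s))"
  by (intro continuous_intros cont_s assms)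

lemma fd_bdd: assumes "x \<in> X" "y \<in> X"
  shows "bdd_above ((\<lambda>s. dist (phi x s) (phi y s)) ` {0..t})"
  using compact_imp_bounded[OF compact_continuous_image[OF cont_d[OF assms] compact_Icc]]
  by (rule bounded_imp_bdd_above)

lemma fd_ge: assumes "x \<in> X" "y \<in> X" "s \<in> {0..t}"
  shows "dist (phi x s) (phi y s) \<le> flow_dist phi t x y"
  unfolding flow_dist_def by (rule cSUP_upper[OF assms(3) fd_bdd[OF assms(1,2)]])

lemma fd_less: assumes "x \<in> X" "y \<in> X" "t \<ge> 0" "\<And>s. s \<in> {0..t} \<Longrightarrow> dist (phi x s) (phi y s) < e"
  shows "flow_dist phi t x y < e"
proof -
  obtain s0 where s0: "s0 \<in> {0..t}" "\<And>s. s \<in> {0..t} \<Longrightarrow> dist (phi x s) (phi y s) \<le> dist (phi x s0) (phi y s0)"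
    using continuous_attains_sup[OF compact_Icc _ cont_d[OF assms(1,2)], of 0 t] assms(3) by auto
  have "flow_dist phi t x y \<le> dist (phi x s0) (phi y s0)"
    unfolding flow_dist_def using assms(3) by (intro cSUP_least) (auto intro: s0)
  also have "\<dots> < e" using assms(4) s0 by auto
  finally show ?thesis .
qed

lemma flow_span_exists: assumes "t \<ge> 0" "e > 0"
  shows "\<exists>E. finite E \<and> E \<subseteq> X \<and> (\<forall>x\<in>X. \<exists>y\<in>E. flow_dist phi t x y < e)"
proof -
  have "uniformly_continuous_on (X \<times> {0..t}) (\<lambda>(x, t). phi x t)"
    by (intro compact_uniformly_continuous compact_Times cpt compact_Icc continuous_on_subset[OF cont]) auto
  then obtain d where d: "d > 0" and
    dd: "\<And>p q. p \<in> X \<times> {0..t} \<Longrightarrow> q \<in> X \<times> {0..t} \<Longrightarrow> dist q p < d \<Longrightarrow>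
           dist ((\<lambda>(x, t). phi x t) q) ((\<lambda>(x, t). phi x t) p) < e"
    unfolding uniformly_continuous_on_def using assms(2) by metis
  obtain k where k: "finite k" "k \<subseteq> X" "X \<subseteq> (\<Union>x\<in>k. ball x d)"
    using seq_compact_imp_totally_bounded[OF compact_imp_seq_compact[OF cpt]] d by metis
  show ?thesis
  proof (intro exI conjI ballI)
    fix x assume x: "x \<in> X"
    then obtain y where y: "y \<in> k" "dist y x < d" using k by auto
    have "flow_dist phi t x y < e"
    proof (rule fd_less[OF x _ assms(1)])
      show "y \<in> X" using y k by auto
      fix s assume s: "s \<in> {0..t}"
      show "dist (phi x s) (phi y s) < e"
        using dd[of "(y,s)" "(x,s)"] s x y k by (auto simp: dist_Pair_Pair dist_commute)
    qed
    then show "\<exists>y\<in>k. flow_dist phi t x y < e" using y by auto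
  qed (use k in auto)
qed

lemma Inf_card_mono:
  assumes "\<And>E. P E \<Longrightarrow> Q E" "\<exists>E. P E"
  shows "Inf {card E | E. Q E} \<le> Inf {card E | E. P E}"
proof -
  have "Inf {card E | E. P E} \<in> {card E | E. P E}"
    by (rule Inf_nat_def1) (use assms(2) in auto)
  then obtain E where "P E" "Inf {card E | E. P E} = card E" by auto
  then show ?thesis using assms(1) by (metis (mono_tags, lifting) cInf_lower bdd_below_bot mem_Collect_eq)
qed

lemma Inf_card_ge1:
  assumes "\<And>E. P E \<Longrightarrow> E \<noteq> {} \<and> finite E" "\<exists>E. P E"
  shows "1 \<le> Inf {card E | E. P E}"
proof -
  have "Inf {card E | E. P E} \<in> {card E | E. P E}"
    by (rule Inf_nat_def1) (use assms(2) in auto)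
  then obtain E where "P E" "Inf {card E | E. P E} = card E" by auto
  then show ?thesis using assms(1) by (metis One_nat_def Suc_leI card_gt_0_iff)
qed

lemma flow_span_ge1: assumes "t \<ge> 0" "e > 0" shows "1 \<le> flow_span X phi t e"
  unfolding flow_span_def using flow_span_exists[OF assms] ne
  by (intro Inf_card_ge1) auto

lemma td_less_iff: assumes "n \<ge> 1"
  shows "time_dist phi \<tau> n x y < e \<longleftrightarrow> (\<forall>j<n. dist (phi x (\<tau> * real j)) (phi y (\<tau> * real j)) < e)"
proof -
  let ?f = "\<lambda>j. dist (phi x (\<tau> * real j)) (phi y (\<tau> * real j))"
  have ne: "?f ` {..<n} \<noteq> {}" using assms by (metis image_is_empty lessThan_iff empty_iff One_nat_def less_eq_Suc_le)
  have fin: "finite (?f ` {..<n})" by simp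
  have "time_dist phi \<tau> n x y = Max (?f ` {..<n})"
    unfolding time_dist_def by (rule cSup_eq_Max[OF fin ne])
  then show ?thesis using Max_less_iff[OF fin ne] by auto
qed

lemma td_le_fd: assumes "n \<ge> 1" "\<tau> > 0" "x \<in> X" "y \<in> X" "flow_dist phi (\<tau> * real (n - 1)) x y < e"
  shows "time_dist phi \<tau> n x y < e"
  unfolding td_less_iff[OF assms(1)]
proof (intro allI impI)
  fix j assume "j < n"
  then have "\<tau> * real j \<in> {0..\<tau> * real (n - 1)}" using assms(2) by auto
  then show "dist (phi x (\<tau> * real j)) (phi y (\<tau> * real j)) < e"
    using fd_ge[OF assms(3,4)] assms(5) by fastforce
qed

lemma time_span_le: assumes "n \<ge> 1" "\<tau> > 0" "e > 0"
  shows "time_span X phi \<tau> n e \<le> flow_span X phi (\<tau> * real (n - 1)) e"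
  unfolding time_span_def flow_span_def
proof (rule Inf_card_mono)
  show "\<exists>E. finite E \<and> E \<subseteq> X \<and> (\<forall>x\<in>X. \<exists>y\<in>E. flow_dist phi (\<tau> * real (n - 1)) x y < e)"
    using flow_span_exists[of "\<tau> * real (n - 1)" e] assms by auto
  fix E assume "finite E \<and> E \<subseteq> X \<and> (\<forall>x\<in>X. \<exists>y\<in>E. flow_dist phi (\<tau> * real (n - 1)) x y < e)"
  then show "finite E \<and> E \<subseteq> X \<and> (\<forall>x\<in>X. \<exists>y\<in>E. time_dist phi \<tau> n x y < e)"
    using td_le_fd[OF assms(1,2)] by blast
qed

lemma time_span_ge1: assumes "n \<ge> 1" "\<tau> > 0" "e > 0" shows "1 \<le> time_span X phi \<tau> n e"
  unfolding time_span_def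
proof (rule Inf_card_ge1)
  show "\<exists>E. finite E \<and> E \<subseteq> X \<and> (\<forall>x\<in>X. \<exists>y\<in>E. time_dist phi \<tau> n x y < e)"
    using flow_span_exists[of "\<tau> * real (n - 1)" e] assms td_le_fd[OF assms(1,2)]
    by (metis mult_nonneg_nonneg of_nat_0_le_iff order_less_imp_le subset_iff)
qed (use ne in auto)

lemma lip_step:
  assumes L: "\<And>x y. x \<in> X \<Longrightarrow> y \<in> X \<Longrightarrow> dist x y \<le> e / L \<Longrightarrow> (\<forall>s\<in>{0..\<tau>}. dist (phi x s) (phi y s) < e)"
  and n: "n \<ge> 1" and tau: "\<tau> > 0" and t: "0 \<le> t" "t \<le> \<tau> * real n"
  and x: "x \<in> X" and y: "y \<in> X" and td: "time_dist phi \<tau> n x y < e / L"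
  shows "flow_dist phi t x y < e"
proof (rule fd_less[OF x y t(1)])
  fix s assume s: "s \<in> {0..t}"
  define j where "j = min (n - 1) (nat \<lfloor>s / \<tau>\<rfloor>)"
  have jn: "j < n" using n by (auto simp: j_def)
  have fl: "real (nat \<lfloor>s / \<tau>\<rfloor>) \<le> s / \<tau>" "s / \<tau> < real (nat \<lfloor>s / \<tau>\<rfloor>) + 1"
    using s tau by (auto simp: of_nat_nat)
  have r0: "0 \<le> s - \<tau> * real j"
  proof -
    have "real j \<le> s / \<tau>" using fl by (auto simp: j_def)
    then show ?thesis using tau by (simp add: field_simps)
  qed
  have r1: "s - \<tau> * real j \<le> \<tau>"
  proof (cases "nat \<lfloor>s / \<tau>\<rfloor> \<le> n - 1")
    case True
    then have "j = nat \<lfloor>s / \<tau>\<rfloor>" by (simp add: j_def)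
    then have "s / \<tau> < real j + 1" using fl by simp
    then show ?thesis using tau by (simp add: field_simps)
  next
    case False
    then have "j = n - 1" by (simp add: j_def)
    then have "real j + 1 = real n" using n by simp
    then have "\<tau> * real n = \<tau> * real j + \<tau>" by (metis distrib_left mult.right_neutral)
    then show ?thesis using tau s t(2) by (simp add: algebra_simps)
  qed
  have d: "dist (phi x (\<tau> * real j)) (phi y (\<tau> * real j)) \<le> e / L"
    using td td_less_iff[OF n] jn by auto
  have "dist (phi (phi x (\<tau> * real j)) (s - \<tau> * real j)) (phi (phi y (\<tau> * real j)) (s - \<tau> * real j)) < e"
    using L[OF inX[OF x] inX[OF y] d] r0 r1 by auto
  then show "dist (phi x s) (phi y s) < e"
    using grp[OF x, of "s - \<tau> * real j" "\<tau> * real j"] grp[OF y, of "s - \<tau> * real j" "\<tau> * real j"] by simp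
qed

lemma flow_span_le_lip:
  assumes L: "\<And>x y. x \<in> X \<Longrightarrow> y \<in> X \<Longrightarrow> dist x y \<le> e / L \<Longrightarrow> (\<forall>s\<in>{0..\<tau>}. dist (phi x s) (phi y s) < e)"
  and n: "n \<ge> 1" and tau: "\<tau> > 0" and t: "0 \<le> t" "t \<le> \<tau> * real n" and eL: "e / L > 0"
  shows "flow_span X phi t e \<le> time_span X phi \<tau> n (e / L)"
  unfolding time_span_def flow_span_def
proof (rule Inf_card_mono)
  show "\<exists>E. finite E \<and> E \<subseteq> X \<and> (\<forall>x\<in>X. \<exists>y\<in>E. time_dist phi \<tau> n x y < e / L)"
    using flow_span_exists[of "\<tau> * real (n - 1)" "e / L"] td_le_fd[OF n tau] tau eL
    by (metis mult_nonneg_nonneg of_nat_0_le_iff order_less_imp_le subset_iff)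
  fix E assume "finite E \<and> E \<subseteq> X \<and> (\<forall>x\<in>X. \<exists>y\<in>E. time_dist phi \<tau> n x y < e / L)"
  then show "finite E \<and> E \<subseteq> X \<and> (\<forall>x\<in>X. \<exists>y\<in>E. flow_dist phi t x y < e)"
    using lip_step[OF L n tau t] by blast
qed

end


lemma Limsup_filter_mono: "F \<le> G \<Longrightarrow> Limsup F f \<le> Limsup G (f :: _ \<Rightarrow> 'b::complete_lattice)"
  unfolding Limsup_def
  by (rule INF_superset_mono) (auto simp: le_filter_def)

lemma Liminf_filter_mono: "F \<le> G \<Longrightarrow> Liminf G f \<le> Liminf F (f :: _ \<Rightarrow> 'b::complete_lattice)"
  unfolding Liminf_def
  by (rule SUP_subset_mono) (auto simp: le_filter_def)

lemma Limsup_compose_le: "filterlim h G F \<Longrightarrow> Limsup F (\<lambda>x. f (h x)) \<le> Limsup G (f :: _ \<Rightarrow> 'b::complete_lattice)"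
  using Limsup_filtermap_ge[where f=h and F=F and g=f] Limsup_filter_mono[of "filtermap h F" G f]
  unfolding filterlim_def by (meson order_trans)

lemma Liminf_compose_ge: "filterlim h G F \<Longrightarrow> Liminf G (f :: _ \<Rightarrow> 'b::complete_lattice) \<le> Liminf F (\<lambda>x. f (h x))"
  using Liminf_filtermap_le[where f=h and F=F and g=f] Liminf_filter_mono[of "filtermap h F" G f]
  unfolding filterlim_def by (meson order_trans)

lemma ereal_div_pos: "(q::real) > 0 \<Longrightarrow> x / ereal q = x * ereal (1 / q)"
  by (cases x) (auto simp: divide_ereal_def divide_inverse)

lemma ereal_le_mult_eps:
  fixes x y :: ereal
  assumes "\<And>d::real. d > 0 \<Longrightarrow> x \<le> ereal (1 + d) * y" and "0 \<le> y"
  shows "x \<le> y"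
proof (cases y)
  case (real r)
  then have r: "r \<ge> 0" using assms(2) by simp
  show ?thesis
  proof (rule ereal_le_epsilon2)
    fix e :: real assume e: "e > 0"
    define d where "d = e / (r + 1)"
    have d: "d > 0" using e r by (simp add: d_def)
    have "d * r \<le> e"
    proof -
      have "d * r \<le> d * (r + 1)" using d by simp
      also have "\<dots> = e" using r by (simp add: d_def)
      finally show ?thesis .
    qed
    then have "ereal (1 + d) * y \<le> y + ereal e" using real by (simp add: algebra_simps)
    then show "x \<le> y + ereal e" using assms(1)[OF d] by simp
  qed
qed (use assms in auto)

context cflow begin

lemma time_rate_nonneg: assumes "\<tau> > 0" "e > 0" shows "0 \<le> time_span_rate X phi \<tau> e"
  unfolding time_span_rate_def
proof (rule le_Limsup)
  show "\<forall>\<^sub>F n in sequentially. 0 \<le> ereal (ln (real (time_span X phi \<tau> n e)) / real n)"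
    using eventually_ge_at_top[of 1] 
  proof eventually_elim
    case (elim n)
    then show ?case using time_span_ge1[OF elim assms] by simp
  qed
qed simp

lemma filterlim_shift: assumes "\<tau> > 0"
  shows "filterlim (\<lambda>n::nat. \<tau> * real (n - 1)) at_top sequentially"
proof (subst filterlim_at_top, intro allI)
  fix Z :: real
  show "\<forall>\<^sub>F n in sequentially. Z \<le> \<tau> * real (n - 1)"
    unfolding eventually_sequentially
  proof (intro exI allI impI)
    fix n assume n: "nat \<lceil>Z / \<tau>\<rceil> + 1 \<le> n"
    then have "Z / \<tau> \<le> real (n - 1)" by linarith
    then show "Z \<le> \<tau> * real (n - 1)" using assms by (simp add: field_simps)
  qed
qed

lemma rate_le1: assumes tau: "\<tau> > 0" and e: "e > 0"
  shows "ereal (1 / \<tau>) * time_span_rate X phi \<tau> e \<le> flow_span_rate X phi e"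
proof -
  have "ereal (1 / \<tau>) * time_span_rate X phi \<tau> e =
        Limsup sequentially (\<lambda>n. ereal (1 / \<tau>) * ereal (ln (real (time_span X phi \<tau> n e)) / real n))"
    unfolding time_span_rate_def using tau by (subst Limsup_ereal_mult_left) auto
  also have "\<dots> \<le> Limsup sequentially (\<lambda>n. (\<lambda>t. ereal (ln (real (flow_span X phi t e)) / t)) (\<tau> * real (n - 1)))"
  proof (rule Limsup_mono)
    show "\<forall>\<^sub>F n in sequentially. ereal (1 / \<tau>) * ereal (ln (real (time_span X phi \<tau> n e)) / real n)
        \<le> (\<lambda>t. ereal (ln (real (flow_span X phi t e)) / t)) (\<tau> * real (n - 1))"
      using eventually_ge_at_top[of 2]
    proof eventually_elim
      case (elim n)
      have n1: "n \<ge> 1" using elim by simp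
      define T where "T = real (time_span X phi \<tau> n e)"
      define F where "F = real (flow_span X phi (\<tau> * real (n - 1)) e)"
      have T1: "1 \<le> T" using time_span_ge1[OF n1 tau e] by (simp add: T_def)
      have TF: "T \<le> F" using time_span_le[OF n1 tau e] by (simp add: T_def F_def)
      have lnT: "0 \<le> ln T" using T1 by simp
      have lnTF: "ln T \<le> ln F" using T1 TF by simp
      have pos: "0 < \<tau> * real (n - 1)" using elim tau by simp
      have le: "\<tau> * real (n - 1) \<le> \<tau> * real n" using tau by simp
      have "1 / \<tau> * (ln T / real n) = ln T / (\<tau> * real n)" by simp
      also have "\<dots> \<le> ln T / (\<tau> * real (n - 1))"
        by (rule divide_left_mono[OF le lnT]) (use pos le in \<open>metis mult_pos_pos order_less_le_trans\<close>)
      also have "\<dots> \<le> ln F / (\<tau> * real (n - 1))"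
        by (rule divide_right_mono[OF lnTF]) (use pos in \<open>linarith\<close>)
      finally show ?case by (simp add: T_def F_def)
    qed
  qed
  also have "\<dots> \<le> flow_span_rate X phi e"
    unfolding flow_span_rate_def by (rule Limsup_compose_le[OF filterlim_shift[OF tau]])
  finally show ?thesis .
qed

lemma filterlim_ceil: assumes "\<tau> > 0"
  shows "filterlim (\<lambda>t::real. nat \<lceil>t / \<tau>\<rceil>) sequentially at_top"
proof (subst filterlim_at_top, intro allI)
  fix Z :: nat
  show "\<forall>\<^sub>F t in at_top. Z \<le> nat \<lceil>t / \<tau>\<rceil>"
    unfolding eventually_at_top_linorder
  proof (intro exI allI impI)
    fix t assume t: "\<tau> * real Z \<le> t"
    then have "real Z \<le> t / \<tau>" using assms by (simp add: field_simps)
    then show "Z \<le> nat \<lceil>t / \<tau>\<rceil>" by linarith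
  qed
qed

lemma rate_le2:
  assumes L: "\<And>x y. x \<in> X \<Longrightarrow> y \<in> X \<Longrightarrow> dist x y \<le> e / L \<Longrightarrow> (\<forall>s\<in>{0..\<tau>}. dist (phi x s) (phi y s) < e)"
  and tau: "\<tau> > 0" and e: "e > 0" and Lpos: "L > 0"
  shows "flow_span_rate X phi e \<le> ereal (1 / \<tau>) * time_span_rate X phi \<tau> (e / L)"
proof (rule ereal_le_mult_eps)
  have eL: "e / L > 0" using e Lpos by simp
  show "0 \<le> ereal (1 / \<tau>) * time_span_rate X phi \<tau> (e / L)"
    using time_rate_nonneg[OF tau eL] tau by simp
  fix d :: real assume d: "d > 0"
  let ?a = "\<lambda>n. ereal (ln (real (time_span X phi \<tau> n (e / L))) / real n)"
  have "flow_span_rate X phi e \<le> Limsup at_top (\<lambda>t. ereal ((1 + d) / \<tau>) * ?a (nat \<lceil>t / \<tau>\<rceil>))"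
    unfolding flow_span_rate_def
  proof (rule Limsup_mono)
    show "\<forall>\<^sub>F t in at_top. ereal (ln (real (flow_span X phi t e)) / t) \<le> ereal ((1 + d) / \<tau>) * ?a (nat \<lceil>t / \<tau>\<rceil>)"
      using eventually_ge_at_top[of "max 1 (\<tau> / d)"]
    proof eventually_elim
      case (elim t)
      define n where "n = nat \<lceil>t / \<tau>\<rceil>"
      have t0: "t > 0" "t \<ge> \<tau> / d" using elim by auto
      have tn: "t / \<tau> \<le> real n" "real n < t / \<tau> + 1" unfolding n_def using t0 tau
        by (auto simp: of_nat_nat) linarith+
      have n1: "n \<ge> 1" using tn t0 tau by (metis One_nat_def Suc_leI divide_pos_pos gr0I less_le_trans of_nat_0 order_less_irrefl)
      have tle: "t \<le> \<tau> * real n" using tn tau by (simp add: field_simps)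
      have nle: "\<tau> * real n \<le> (1 + d) * t"
      proof -
        have "\<tau> * real n < t + \<tau>" using tn(2) tau by (simp add: field_simps)
        moreover have "\<tau> \<le> d * t" using t0(2) d by (simp add: field_simps)
        ultimately show ?thesis by (simp add: algebra_simps)
      qed
      define T where "T = real (time_span X phi \<tau> n (e / L))"
      define F where "F = real (flow_span X phi t e)"
      have T1: "1 \<le> T" using time_span_ge1[OF n1 tau eL] by (simp add: T_def)
      have F1: "1 \<le> F" using flow_span_ge1[of t e] t0 e by (simp add: F_def)
      have FT: "F \<le> T" using flow_span_le_lip[OF L n1 tau _ tle eL] t0 by (simp add: F_def T_def)
      have lnT: "0 \<le> ln T" using T1 by simp
      have lnFT: "ln F \<le> ln T" using F1 FT by simp
      have npos: "real n > 0" using n1 by simp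
      have "ln F / t \<le> ln T / t" by (rule divide_right_mono[OF lnFT]) (use t0 in simp)
      also have "\<dots> = (ln T / real n) * (real n / t)" using npos by simp
      also have "\<dots> \<le> (ln T / real n) * ((1 + d) / \<tau>)"
      proof (rule mult_left_mono)
        show "real n / t \<le> (1 + d) / \<tau>" using nle t0 tau by (simp add: field_simps)
      qed (use lnT npos in simp)
      finally have "ln F / t \<le> (1 + d) / \<tau> * (ln T / real n)" by (simp add: mult.commute)
      then show ?case by (simp add: F_def T_def n_def)
    qed
  qed
  also have "\<dots> = ereal ((1 + d) / \<tau>) * Limsup at_top (\<lambda>t. ?a (nat \<lceil>t / \<tau>\<rceil>))"
    using tau d by (subst Limsup_ereal_mult_left) auto
  also have "\<dots> \<le> ereal ((1 + d) / \<tau>) * time_span_rate X phi \<tau> (e / L)"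
    unfolding time_span_rate_def
    by (rule ereal_mult_left_mono[OF Limsup_compose_le[OF filterlim_ceil[OF tau]]]) (use tau d in simp)
  also have "\<dots> = ereal (1 + d) * (ereal (1 / \<tau>) * time_span_rate X phi \<tau> (e / L))"
    by (simp add: mult.assoc[symmetric])
  finally show "flow_span_rate X phi e \<le> ereal (1 + d) * (ereal (1 / \<tau>) * time_span_rate X phi \<tau> (e / L))" .
qed

end



lemma filterlim_scale: "(c::real) > 0 \<Longrightarrow> filterlim (\<lambda>e. c * e) (at_right 0) (at_right 0)"
  unfolding filterlim_at
proof
  assume c: "c > 0"
  show "\<forall>\<^sub>F x in at_right 0. c * x \<in> {0<..} \<and> c * x \<noteq> 0"
    using eventually_at_right_less[of "0::real"] by eventually_elim (use c in auto)
  have "((\<lambda>e. c * e) \<longlongrightarrow> c * 0) (at_right (0::real))"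
    by (intro tendsto_mult_left tendsto_ident_at)
  then show "((\<lambda>e. c * e) \<longlongrightarrow> 0) (at_right 0)" by simp
qed

lemma min_pos: "(a::real) > 0 \<Longrightarrow> b > 0 \<Longrightarrow> min a b > 0" by simp

lemma ev_small: "(c::real) > 0 \<Longrightarrow> \<forall>\<^sub>F e in at_right 0. 0 < e \<and> e < c"
  using eventually_at_right_less[of "0::real"] order_tendstoD(2)[OF tendsto_ident_at[of 0 "{0<..}"], of c]
  by (auto elim: eventually_elim2)

context cflow begin

lemma upper1: assumes tau: "\<tau> > 0"
  shows "ereal (1 / \<tau>) * time_upper_mdim X phi \<tau> \<le> flow_upper_mdim X phi"
proof -
  have "ereal (1 / \<tau>) * time_upper_mdim X phi \<tau> =
     Limsup (at_right 0) (\<lambda>e. ereal (1 / \<tau>) * (time_span_rate X phi \<tau> e / ereal (ln (1 / e))))"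
    unfolding time_upper_mdim_def using tau by (subst Limsup_ereal_mult_left) auto
  also have "\<dots> \<le> flow_upper_mdim X phi"
    unfolding flow_upper_mdim_def
  proof (rule Limsup_mono)
    show "\<forall>\<^sub>F e in at_right 0. ereal (1 / \<tau>) * (time_span_rate X phi \<tau> e / ereal (ln (1 / e)))
        \<le> flow_span_rate X phi e / ereal (ln (1 / e))"
      using ev_small[of 1, OF zero_less_one]
    proof eventually_elim
      case (elim e)
      have q: "ln (1 / e) > 0" using elim by simp
      have "ereal (1 / \<tau>) * (time_span_rate X phi \<tau> e / ereal (ln (1 / e)))
          = (ereal (1 / \<tau>) * time_span_rate X phi \<tau> e) * ereal (1 / ln (1 / e))"
        by (simp add: ereal_div_pos[OF q] mult.assoc)
      also have "\<dots> \<le> flow_span_rate X phi e * ereal (1 / ln (1 / e))"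
        by (rule ereal_mult_right_mono[OF rate_le1[OF tau]]) (use elim q in auto)
      finally show ?case by (simp add: ereal_div_pos[OF q])
    qed
  qed
  finally show ?thesis .
qed

lemma lower1: assumes tau: "\<tau> > 0"
  shows "ereal (1 / \<tau>) * time_lower_mdim X phi \<tau> \<le> flow_lower_mdim X phi"
proof -
  have "ereal (1 / \<tau>) * time_lower_mdim X phi \<tau> =
     Liminf (at_right 0) (\<lambda>e. ereal (1 / \<tau>) * (time_span_rate X phi \<tau> e / ereal (ln (1 / e))))"
    unfolding time_lower_mdim_def using tau by (subst Liminf_ereal_mult_left) auto
  also have "\<dots> \<le> flow_lower_mdim X phi"
    unfolding flow_lower_mdim_def
  proof (rule Liminf_mono)
    show "\<forall>\<^sub>F e in at_right 0. ereal (1 / \<tau>) * (time_span_rate X phi \<tau> e / ereal (ln (1 / e)))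
        \<le> flow_span_rate X phi e / ereal (ln (1 / e))"
      using ev_small[of 1, OF zero_less_one]
    proof eventually_elim
      case (elim e)
      have q: "ln (1 / e) > 0" using elim by simp
      have "ereal (1 / \<tau>) * (time_span_rate X phi \<tau> e / ereal (ln (1 / e)))
          = (ereal (1 / \<tau>) * time_span_rate X phi \<tau> e) * ereal (1 / ln (1 / e))"
        by (simp add: ereal_div_pos[OF q] mult.assoc)
      also have "\<dots> \<le> flow_span_rate X phi e * ereal (1 / ln (1 / e))"
        by (rule ereal_mult_right_mono[OF rate_le1[OF tau]]) (use elim q in auto)
      finally show ?case by (simp add: ereal_div_pos[OF q])
    qed
  qed
  finally show ?thesis .
qed

lemma pointwise2:
  assumes L: "\<And>e x y. e > 0 \<Longrightarrow> x \<in> X \<Longrightarrow> y \<in> X \<Longrightarrow> dist x y \<le> e / L \<Longrightarrow> (\<forall>s\<in>{0..\<tau>}. dist (phi x s) (phi y s) < e)"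
  and tau: "\<tau> > 0" and L1: "L \<ge> 1" and d: "d > 0"
  shows "\<forall>\<^sub>F e in at_right 0. flow_span_rate X phi e / ereal (ln (1 / e))
     \<le> ereal ((1 + d) / \<tau>) * (time_span_rate X phi \<tau> (e / L) / ereal (ln (1 / (e / L))))"
  using ev_small[of "min 1 (exp (- (ln L / d)))", OF min_pos[OF zero_less_one exp_gt_zero]]
proof eventually_elim
  case (elim e)
  have Lpos: "L > 0" using L1 by simp
  have eL: "e / L > 0" using elim Lpos by simp
  define q where "q = ln (1 / e)"
  define q' where "q' = ln (1 / (e / L))"
  have q: "q > 0" using elim by (simp add: q_def)
  have q'eq: "q' = ln L + q" using elim Lpos by (simp add: q_def q'_def ln_div)
  have lnL: "ln L \<ge> 0" using L1 by simp
  have q': "q' > 0" using q q'eq lnL by simp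
  have "e < exp (- (ln L / d))" using elim by simp
  then have "ln e < - (ln L / d)" using elim by (metis exp_less_cancel_iff exp_ln)
  then have "ln L / d < q" using elim by (simp add: q_def ln_div)
  then have "ln L \<le> d * q" using d by (simp add: field_simps)
  then have qq: "q' \<le> (1 + d) * q" using q'eq by (simp add: algebra_simps)
  have r0: "0 \<le> time_span_rate X phi \<tau> (e / L)" by (rule time_rate_nonneg[OF tau eL])
  have "flow_span_rate X phi e / ereal q = flow_span_rate X phi e * ereal (1 / q)"
    by (rule ereal_div_pos[OF q])
  also have "\<dots> \<le> (ereal (1 / \<tau>) * time_span_rate X phi \<tau> (e / L)) * ereal (1 / q)"
    by (rule ereal_mult_right_mono[OF rate_le2]) (use L[OF elim[THEN conjunct1]] tau elim Lpos q in auto)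
  also have "\<dots> \<le> (ereal (1 / \<tau>) * time_span_rate X phi \<tau> (e / L)) * ereal ((1 + d) / q')"
  proof (rule ereal_mult_left_mono)
    show "ereal (1 / q) \<le> ereal ((1 + d) / q')" using qq q q' by (simp add: field_simps)
    show "0 \<le> ereal (1 / \<tau>) * time_span_rate X phi \<tau> (e / L)" using r0 tau by simp
  qed
  also have "\<dots> = ereal ((1 + d) / \<tau>) * (time_span_rate X phi \<tau> (e / L) * ereal (1 / q'))"
  proof -
    have a: "ereal ((1 + d) / q') = ereal (1 + d) * ereal (1 / q')" by simp
    have b: "ereal ((1 + d) / \<tau>) = ereal (1 + d) * ereal (1 / \<tau>)" by simp
    show ?thesis unfolding a b by (simp only: mult.assoc mult.left_commute mult.commute)
  qed
  finally have fin: "flow_span_rate X phi e / ereal q \<le> ereal ((1 + d) / \<tau>) * (time_span_rate X phi \<tau> (e / L) * ereal (1 / q'))" .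
  have "time_span_rate X phi \<tau> (e / L) / ereal q' = time_span_rate X phi \<tau> (e / L) * ereal (1 / q')"
    by (rule ereal_div_pos[OF q'])
  with fin have "flow_span_rate X phi e / ereal q \<le> ereal ((1 + d) / \<tau>) * (time_span_rate X phi \<tau> (e / L) / ereal q')"
    by (simp only:)
  then show ?case by (simp only: q_def q'_def)
qed

lemma G_nonneg: assumes tau: "\<tau> > 0"
  shows "\<forall>\<^sub>F e in at_right 0. 0 \<le> time_span_rate X phi \<tau> e / ereal (ln (1 / e))"
  using ev_small[of 1, OF zero_less_one]
proof eventually_elim
  case (elim e)
  have q: "ln (1 / e) > 0" using elim by simp
  show ?case unfolding ereal_div_pos[OF q]
    using time_rate_nonneg[OF tau, of e] elim q by simp
qed

lemma filterlim_divL: "(L::real) > 0 \<Longrightarrow> filterlim (\<lambda>e. e / L) (at_right 0) (at_right 0)"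
  using filterlim_scale[of "1 / L"] by simp

lemma upper2:
  assumes L: "\<And>e x y. e > 0 \<Longrightarrow> x \<in> X \<Longrightarrow> y \<in> X \<Longrightarrow> dist x y \<le> e / L \<Longrightarrow> (\<forall>s\<in>{0..\<tau>}. dist (phi x s) (phi y s) < e)"
  and tau: "\<tau> > 0" and L1: "L \<ge> 1"
  shows "flow_upper_mdim X phi \<le> ereal (1 / \<tau>) * time_upper_mdim X phi \<tau>"
proof (rule ereal_le_mult_eps)
  have "0 \<le> time_upper_mdim X phi \<tau>"
    unfolding time_upper_mdim_def by (rule le_Limsup[OF _ G_nonneg[OF tau]]) simp
  then show "0 \<le> ereal (1 / \<tau>) * time_upper_mdim X phi \<tau>" using tau by simp
  fix d :: real assume d: "d > 0"
  let ?G = "\<lambda>e. time_span_rate X phi \<tau> e / ereal (ln (1 / e))"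
  have "flow_upper_mdim X phi \<le> Limsup (at_right 0) (\<lambda>e. ereal ((1 + d) / \<tau>) * ?G (e / L))"
    unfolding flow_upper_mdim_def by (rule Limsup_mono[OF pointwise2[OF L tau L1 d]])
  also have "\<dots> = ereal ((1 + d) / \<tau>) * Limsup (at_right 0) (\<lambda>e. ?G (e / L))"
    using tau d by (subst Limsup_ereal_mult_left) auto
  also have "\<dots> \<le> ereal ((1 + d) / \<tau>) * time_upper_mdim X phi \<tau>"
    unfolding time_upper_mdim_def
    by (rule ereal_mult_left_mono[OF Limsup_compose_le[OF filterlim_divL]]) (use tau d L1 in simp_all)
  also have "\<dots> = ereal (1 + d) * (ereal (1 / \<tau>) * time_upper_mdim X phi \<tau>)"
    by (simp add: mult.assoc[symmetric])
  finally show "flow_upper_mdim X phi \<le> ereal (1 + d) * (ereal (1 / \<tau>) * time_upper_mdim X phi \<tau>)" .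
qed

lemma lower2:
  assumes L: "\<And>e x y. e > 0 \<Longrightarrow> x \<in> X \<Longrightarrow> y \<in> X \<Longrightarrow> dist x y \<le> e / L \<Longrightarrow> (\<forall>s\<in>{0..\<tau>}. dist (phi x s) (phi y s) < e)"
  and tau: "\<tau> > 0" and L1: "L \<ge> 1"
  shows "flow_lower_mdim X phi \<le> ereal (1 / \<tau>) * time_lower_mdim X phi \<tau>"
proof (rule ereal_le_mult_eps)
  have "0 \<le> time_lower_mdim X phi \<tau>"
    unfolding time_lower_mdim_def by (rule Liminf_bounded[OF G_nonneg[OF tau]])
  then show "0 \<le> ereal (1 / \<tau>) * time_lower_mdim X phi \<tau>" using tau by simp
  fix d :: real assume d: "d > 0"
  let ?G = "\<lambda>e. time_span_rate X phi \<tau> e / ereal (ln (1 / e))"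
  have "flow_lower_mdim X phi \<le> Liminf (at_right 0) (\<lambda>e. ereal ((1 + d) / \<tau>) * ?G (e / L))"
    unfolding flow_lower_mdim_def by (rule Liminf_mono[OF pointwise2[OF L tau L1 d]])
  also have "\<dots> = ereal ((1 + d) / \<tau>) * Liminf (at_right 0) (\<lambda>e. ?G (e / L))"
    using tau d by (subst Liminf_ereal_mult_left) auto
  also have "\<dots> \<le> ereal ((1 + d) / \<tau>) * time_lower_mdim X phi \<tau>"
  proof (rule ereal_mult_left_mono)
    have "Liminf (at_right 0) (\<lambda>e. ?G (e / L)) \<le> Liminf (at_right 0) (\<lambda>x. ?G ((L * x) / L))"
      by (rule Liminf_compose_ge[OF filterlim_scale]) (use L1 in simp)
    also have "\<dots> = time_lower_mdim X phi \<tau>"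
      unfolding time_lower_mdim_def using L1 by simp
    finally show "Liminf (at_right 0) (\<lambda>e. ?G (e / L)) \<le> time_lower_mdim X phi \<tau>" .
  qed (use tau d in simp)
  also have "\<dots> = ereal (1 + d) * (ereal (1 / \<tau>) * time_lower_mdim X phi \<tau>)"
    by (simp add: mult.assoc[symmetric])
  finally show "flow_lower_mdim X phi \<le> ereal (1 + d) * (ereal (1 / \<tau>) * time_lower_mdim X phi \<tau>)" .
qed

end

theorem proposition2p7:
  fixes X :: "'a::metric_space set" and phi :: "'a \<Rightarrow> real \<Rightarrow> 'a"
  assumes "compact X" and "X \<noteq> {}" and "is_flow X phi"
  shows "(\<forall>\<tau>>0. ereal (1 / \<tau>) * time_upper_mdim X phi \<tau> \<le> flow_upper_mdim X phi \<and>
                ereal (1 / \<tau>) * time_lower_mdim X phi \<tau> \<le> flow_lower_mdim X phi) \<and>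
         (uniformly_lipschitz_flow X phi \<longrightarrow>
            (\<forall>\<tau>>0. ereal (1 / \<tau>) * time_upper_mdim X phi \<tau> = flow_upper_mdim X phi \<and>
                   ereal (1 / \<tau>) * time_lower_mdim X phi \<tau> = flow_lower_mdim X phi))"
proof -
  interpret cflow X phi using assms by unfold_locales
  have part1: "\<forall>\<tau>>0. ereal (1 / \<tau>) * time_upper_mdim X phi \<tau> \<le> flow_upper_mdim X phi \<and>
                ereal (1 / \<tau>) * time_lower_mdim X phi \<tau> \<le> flow_lower_mdim X phi"
    using upper1 lower1 by blast
  have part2: "\<forall>\<tau>>0. ereal (1 / \<tau>) * time_upper_mdim X phi \<tau> = flow_upper_mdim X phi \<and>
                   ereal (1 / \<tau>) * time_lower_mdim X phi \<tau> = flow_lower_mdim X phi"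
    if ul: "uniformly_lipschitz_flow X phi"
  proof (intro allI impI)
    fix \<tau> :: real assume tau: "\<tau> > 0"
    obtain L0 where L0: "L0 > 0" and
      H: "\<And>e x y. e > 0 \<Longrightarrow> x \<in> X \<Longrightarrow> y \<in> X \<Longrightarrow> dist x y \<le> e / L0 \<Longrightarrow> (\<forall>s\<in>{0..\<tau>}. dist (phi x s) (phi y s) < e)"
      using ul tau unfolding uniformly_lipschitz_flow_def by meson
    define L where "L = max L0 1"
    have L1: "L \<ge> 1" by (simp add: L_def)
    have HL: "\<forall>s\<in>{0..\<tau>}. dist (phi x s) (phi y s) < e"
      if "e > 0" "x \<in> X" "y \<in> X" "dist x y \<le> e / L" for e x y
    proof (rule H[OF that(1-3)])
      have "e / L \<le> e / L0" using L0 that(1) by (simp add: L_def frac_le)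
      then show "dist x y \<le> e / L0" using that(4) by linarith
    qed
    show "ereal (1 / \<tau>) * time_upper_mdim X phi \<tau> = flow_upper_mdim X phi \<and>
          ereal (1 / \<tau>) * time_lower_mdim X phi \<tau> = flow_lower_mdim X phi"
    proof -
      have u2: "flow_upper_mdim X phi \<le> ereal (1 / \<tau>) * time_upper_mdim X phi \<tau>"
        by (rule upper2[where L=L, OF _ tau L1]) (rule HL; assumption)
      have l2: "flow_lower_mdim X phi \<le> ereal (1 / \<tau>) * time_lower_mdim X phi \<tau>"
        by (rule lower2[where L=L, OF _ tau L1]) (rule HL; assumption)
      show ?thesis using upper1[OF tau] lower1[OF tau] u2 l2 by (meson antisym)
    qed
  qed
  show ?thesis using part1 part2 by blast
qed

end
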